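(* Let $p,q\in\Bbbk^\times$ with $q\neq1$, and let $\Phi:A(q)\to A(p)$ be a graded isomorphism of type I. Then there are scalars $k_1,\dots,k_4,\ell_1,\dots,\ell_4\in\Bbbk$ with $k_1k_4-k_2k_3\neq0$ and $\ell_1\ell_4-\ell_2\ell_3\neq0$ such that $\Phi(a)=k_1a+k_2c$, $\Phi(b)=\ell_1b+\ell_2d$, $\Phi(c)=k_3a+k_4c$, $\Phi(d)=\ell_3b+\ell_4d$. If $k_1\neq0$ and $k_4\neq0$, then $p=q$.
   Context: $\Bbbk$ is an algebraically closed field of characteristic zero. Paths are written left to right; path algebras are graded by path length. Let $Q$ be the quiver with vertices $e_1,e_2$, arrows $a,c:e_1\to e_2$ and $b,d:e_2\to e_1$; $A(q)=\Bbbk Q/(ab-cd,\ ba-q\,dc)$. A graded isomorphism $\Phi:A(q)\to A(p)$ is an algebra isomorphism for which there is a permutation $\sigma$ of the vertices with $\Phi$ mapping the degree-$k$ part $e_uA(q)_ke_v$ onto $e_{\sigma(u)}A(p)_ke_{\sigma(v)}$ for all $k,u,v$. It is of type I if $\Phi(e_1)=e_1$ and $\Phi(e_2)=e_2$. *)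

theory Defs
  imports "HOL-Algebra.QuotRing" "HOL-Computational_Algebra.Polynomial" "HOL-Library.Function_Algebras"
begin

definition alg_closed :: "'k::field itself \<Rightarrow> bool" where
  "alg_closed _ \<longleftrightarrow> (\<forall>f :: 'k poly. degree f \<ge> 1 \<longrightarrow> (\<exists>x. poly f x = 0))"

datatype vert = V1 | V2
datatype arrow = Aa | Ab | Ac | Ad

fun src :: "arrow \<Rightarrow> vert" where
  "src Aa = V1" | "src Ac = V1" | "src Ab = V2" | "src Ad = V2"
fun tgt :: "arrow \<Rightarrow> vert" where
  "tgt Aa = V2" | "tgt Ac = V2" | "tgt Ab = V1" | "tgt Ad = V1"

text \<open>A path is a start vertex plus a list of arrows, read left to right.
  The trivial path at v is (v, []).\<close>
type_synonym qpath = "vert \<times> arrow list"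

fun composable :: "vert \<Rightarrow> arrow list \<Rightarrow> bool" where
  "composable v [] = True"
| "composable v (x # xs) = (src x = v \<and> composable (tgt x) xs)"

definition valid_path :: "qpath \<Rightarrow> bool" where
  "valid_path z \<longleftrightarrow> composable (fst z) (snd z)"

fun endv :: "vert \<Rightarrow> arrow list \<Rightarrow> vert" where
  "endv v [] = v"
| "endv v (x # xs) = endv (tgt x) xs"

definition path_end :: "qpath \<Rightarrow> vert" where
  "path_end z = endv (fst z) (snd z)"

definition pcomp :: "qpath \<Rightarrow> qpath \<Rightarrow> qpath option" where
  "pcomp x y = (if path_end x = fst y then Some (fst x, snd x @ snd y) else None)"

definition supp :: "(qpath \<Rightarrow> 'k::zero) \<Rightarrow> qpath set" where
  "supp f = {z. f z \<noteq> 0}"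

definition KQ :: "(qpath \<Rightarrow> 'k::field) set" where
  "KQ = {f. finite (supp f) \<and> (\<forall>z\<in>supp f. valid_path z)}"

definition basis :: "qpath \<Rightarrow> qpath \<Rightarrow> 'k::field" where
  "basis x = (\<lambda>z. if z = x then 1 else 0)"

definition pmult :: "(qpath \<Rightarrow> 'k::field) \<Rightarrow> (qpath \<Rightarrow> 'k) \<Rightarrow> qpath \<Rightarrow> 'k" where
  "pmult f g = (\<lambda>z. \<Sum>x\<in>supp f. \<Sum>y\<in>supp g.
                    if pcomp x y = Some z then f x * g y else 0)"

definition kQ :: "(qpath \<Rightarrow> 'k::field) ring" where
  "kQ = \<lparr>carrier = KQ, monoid.mult = pmult, one = basis (V1, []) + basis (V2, []),
         zero = 0, add = (+)\<rparr>"

definition idem :: "vert \<Rightarrow> qpath \<Rightarrow> 'k::field" where "idem v = basis (v, [])"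
definition arr :: "arrow \<Rightarrow> qpath \<Rightarrow> 'k::field" where "arr x = basis (src x, [x])"
definition path2 :: "arrow \<Rightarrow> arrow \<Rightarrow> qpath \<Rightarrow> 'k::field" where
  "path2 x y = basis (src x, [x, y])"

definition smul :: "'k::field \<Rightarrow> (qpath \<Rightarrow> 'k) \<Rightarrow> qpath \<Rightarrow> 'k" where
  "smul c f = (\<lambda>z. c * f z)"

definition Rel :: "'k::field \<Rightarrow> (qpath \<Rightarrow> 'k) set" where
  "Rel q = genideal kQ {path2 Aa Ab - path2 Ac Ad, path2 Ab Aa - smul q (path2 Ad Ac)}"

definition Aq :: "'k::field \<Rightarrow> (qpath \<Rightarrow> 'k) set ring" where
  "Aq q = kQ Quot Rel q"

definition cls :: "'k::field \<Rightarrow> (qpath \<Rightarrow> 'k) \<Rightarrow> (qpath \<Rightarrow> 'k) set" where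
  "cls q x = Rel q +>\<^bsub>kQ\<^esub> x"

definition Apiece :: "'k::field \<Rightarrow> vert \<Rightarrow> nat \<Rightarrow> vert \<Rightarrow> (qpath \<Rightarrow> 'k) set set" where
  "Apiece q u n v = cls q ` {x \<in> KQ. \<forall>z\<in>supp x. fst z = u \<and> length (snd z) = n \<and> path_end z = v}"

text \<open>Algebra isomorphism: ring isomorphism of the quotients that is k-linear.\<close>
definition alg_iso :: "'k::field \<Rightarrow> 'k \<Rightarrow> ((qpath \<Rightarrow> 'k) set \<Rightarrow> (qpath \<Rightarrow> 'k) set) \<Rightarrow> bool" where
  "alg_iso q p \<Phi> \<longleftrightarrow> \<Phi> \<in> ring_iso (Aq q) (Aq p) \<and>
     (\<forall>c x y. x \<in> KQ \<longrightarrow> y \<in> KQ \<longrightarrow> \<Phi> (cls q x) = cls p y \<longrightarrow> \<Phi> (cls q (smul c x)) = cls p (smul c y))"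

definition graded_iso :: "'k::field \<Rightarrow> 'k \<Rightarrow> ((qpath \<Rightarrow> 'k) set \<Rightarrow> (qpath \<Rightarrow> 'k) set) \<Rightarrow> bool" where
  "graded_iso q p \<Phi> \<longleftrightarrow> alg_iso q p \<Phi> \<and>
     (\<exists>\<sigma>. bij \<sigma> \<and> (\<forall>u n v. \<Phi> ` Apiece q u n v = Apiece p (\<sigma> u) n (\<sigma> v)))"

definition type_I :: "'k::field \<Rightarrow> 'k \<Rightarrow> ((qpath \<Rightarrow> 'k) set \<Rightarrow> (qpath \<Rightarrow> 'k) set) \<Rightarrow> bool" where
  "type_I q p \<Phi> \<longleftrightarrow> \<Phi> (cls q (idem V1)) = cls p (idem V1) \<and> \<Phi> (cls q (idem V2)) = cls p (idem V2)"

end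

theory Submission
  imports Defs
begin


lemma composable_append:
  "composable v (xs @ ys) \<longleftrightarrow> composable v xs \<and> composable (endv v xs) ys"
  by (induction xs arbitrary: v) auto

lemma endv_append: "endv v (xs @ ys) = endv (endv v xs) ys"
  by (induction xs arbitrary: v) auto

definition pre :: "qpath \<Rightarrow> nat \<Rightarrow> qpath" where
  "pre z i = (fst z, take i (snd z))"
definition suf :: "qpath \<Rightarrow> nat \<Rightarrow> qpath" where
  "suf z i = (endv (fst z) (take i (snd z)), drop i (snd z))"

lemma pcomp_Some_iff:
  "pcomp x y = Some z \<longleftrightarrow> path_end x = fst y \<and> z = (fst x, snd x @ snd y)"
  unfolding pcomp_def by auto

lemma pcomp_pre_suf: "pcomp (pre z i) (suf z i) = Some z"
  unfolding pcomp_def pre_def suf_def path_end_def by simp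

lemma inj_pre_suf: "inj_on (\<lambda>i. (pre z i, suf z i)) {..length (snd z)}"
proof (rule inj_onI)
  fix i j assume "i \<in> {..length (snd z)}" "j \<in> {..length (snd z)}"
    "(pre z i, suf z i) = (pre z j, suf z j)"
  then have "take i (snd z) = take j (snd z)" "i \<le> length (snd z)" "j \<le> length (snd z)"
    unfolding pre_def by auto
  then have "length (take i (snd z)) = length (take j (snd z))" by simp
  then show "i = j" using \<open>i \<le> _\<close> \<open>j \<le> _\<close> by simp
qed

lemma pmult_formula:
  assumes "finite (supp f)" "finite (supp g)"
  shows "pmult f g z = (\<Sum>i\<le>length (snd z). f (pre z i) * g (suf z i))"
proof -
  define D where "D = (\<lambda>i. (pre z i, suf z i)) ` {..length (snd z)}"
  define F where "F = (\<lambda>(x,y). if pcomp x y = Some z then f x * g y else 0)"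
  have "pmult f g z = (\<Sum>x\<in>supp f. \<Sum>y\<in>supp g. F (x, y))"
    unfolding pmult_def by (simp add: F_def)
  also have "\<dots> = sum F (supp f \<times> supp g)"
    using sum.cartesian_product[of "\<lambda>x y. F (x,y)" "supp g" "supp f"] by simp
  also have "\<dots> = sum F D"
  proof (rule sum.mono_neutral_cong)
    show "finite (supp f \<times> supp g)" using assms by simp
    show "finite D" unfolding D_def by simp
    show "F i = 0" if "i \<in> D - supp f \<times> supp g" for i
      using that unfolding F_def supp_def by (cases i) (auto split: if_splits)
    show "F p = 0" if p: "p \<in> supp f \<times> supp g - D" for p
    proof (rule ccontr)
      assume "F p \<noteq> 0"
      obtain x y where xy: "p = (x, y)" by (cases p) blast
      from \<open>F p \<noteq> 0\<close> have pc: "pcomp x y = Some z" unfolding F_def xy by (auto split: if_splits)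
      from pc have e: "path_end x = fst y" "z = (fst x, snd x @ snd y)"
        unfolding pcomp_Some_iff by auto
      let ?i = "length (snd x)"
      have 1: "pre z ?i = x" unfolding pre_def e by (cases x) auto
      have 2: "suf z ?i = y" unfolding suf_def e using e(1)
        by (cases x, cases y) (auto simp: path_end_def)
      have 3: "?i \<in> {..length (snd z)}" using e by simp
      have "p \<in> D" unfolding D_def xy
        using rev_image_eqI[OF 3, of "(x,y)" "\<lambda>i. (pre z i, suf z i)"] 1 2 by simp
      with p show False by auto
    qed
  qed simp
  also have "\<dots> = sum (\<lambda>p. f (fst p) * g (snd p)) D"
    unfolding D_def by (intro sum.cong[OF refl]) (auto simp: F_def pcomp_pre_suf)
  also have "\<dots> = (\<Sum>i\<le>length (snd z). f (pre z i) * g (suf z i))"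
    unfolding D_def
    by (subst sum.reindex[OF inj_pre_suf]) simp
  finally show ?thesis .
qed

lemma supp_pmult_subset:
  "supp (pmult f g) \<subseteq> (\<lambda>(x,y). (fst x, snd x @ snd y)) ` (supp f \<times> supp g)"
proof
  fix z assume "z \<in> supp (pmult f g)"
  then have "pmult f g z \<noteq> 0" unfolding supp_def by simp
  then obtain x where x: "x \<in> supp f" and
    "(\<Sum>y\<in>supp g. if pcomp x y = Some z then f x * g y else 0) \<noteq> 0"
    unfolding pmult_def using sum.not_neutral_contains_not_neutral by blast
  then obtain y where y: "y \<in> supp g" and "(if pcomp x y = Some z then f x * g y else 0) \<noteq> 0"
    using sum.not_neutral_contains_not_neutral by blast
  then have "x \<in> supp f" "y \<in> supp g" "pcomp x y = Some z" using x by (auto split: if_splits)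
  then have "(x,y) \<in> supp f \<times> supp g" "z = (\<lambda>(x,y). (fst x, snd x @ snd y)) (x,y)"
    unfolding pcomp_Some_iff by auto
  then show "z \<in> (\<lambda>(x,y). (fst x, snd x @ snd y)) ` (supp f \<times> supp g)"
    by (rule rev_image_eqI)
qed

lemma pmult_nonzero_witness:
  assumes "pmult f g z \<noteq> 0"
  shows "\<exists>x\<in>supp f. \<exists>y\<in>supp g. pcomp x y = Some z"
proof -
  obtain x where x: "x \<in> supp f" and
    "(\<Sum>y\<in>supp g. if pcomp x y = Some z then f x * g y else 0) \<noteq> 0"
    using assms unfolding pmult_def using sum.not_neutral_contains_not_neutral by blast
  then obtain y where y: "y \<in> supp g" and "(if pcomp x y = Some z then f x * g y else 0) \<noteq> 0"
    using sum.not_neutral_contains_not_neutral by blast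
  then have "pcomp x y = Some z" by (auto split: if_splits)
  then show ?thesis using x y by blast
qed

lemma finite_supp_pmult:
  "finite (supp f) \<Longrightarrow> finite (supp g) \<Longrightarrow> finite (supp (pmult f g))"
  by (rule finite_subset[OF supp_pmult_subset]) simp

lemma pre_pre: "j \<le> i \<Longrightarrow> pre (pre z i) j = pre z j"
  unfolding pre_def by (simp add: min_def)

lemma suf_pre: "j \<le> i \<Longrightarrow> suf (pre z i) j = pre (suf z j) (i - j)"
  unfolding pre_def suf_def by (simp add: min_def drop_take)

lemma suf_suf: "suf (suf z j) m = suf z (j + m)"
proof -
  have "drop m (drop j (snd z)) = drop (j + m) (snd z)"
    by (simp add: drop_drop add.commute)
  then show ?thesis unfolding suf_def by (simp add: take_add endv_append)
qed

lemma pmult_assoc: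
  assumes f: "finite (supp f)" and g: "finite (supp g)" and h: "finite (supp h)"
  shows "pmult (pmult f g) h = pmult f (pmult g h)"
proof
  fix z :: qpath
  define n where "n = length (snd z)"
  define G where "G = (\<lambda>j m. f (pre z j) * g (pre (suf z j) m) * h (suf z (j + m)))"
  have fg: "finite (supp (pmult f g))" and gh: "finite (supp (pmult g h))"
    using f g h finite_supp_pmult by blast+
  have "pmult (pmult f g) h z = (\<Sum>i\<le>n. pmult f g (pre z i) * h (suf z i))"
    unfolding n_def by (rule pmult_formula[OF fg h])
  also have "\<dots> = (\<Sum>i\<le>n. \<Sum>j\<le>i. G j (i - j))"
  proof (rule sum.cong[OF refl])
    fix i assume i: "i \<in> {..n}"
    have li: "length (snd (pre z i)) = i" using i unfolding n_def pre_def by auto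
    have "pmult f g (pre z i) * h (suf z i) = (\<Sum>j\<le>i. f (pre (pre z i) j) * g (suf (pre z i) j)) * h (suf z i)"
      using pmult_formula[OF f g, of "pre z i"] li by simp
    also have "\<dots> = (\<Sum>j\<le>i. f (pre (pre z i) j) * g (suf (pre z i) j) * h (suf z i))"
      by (simp add: sum_distrib_right)
    also have "\<dots> = (\<Sum>j\<le>i. G j (i - j))"
      by (rule sum.cong[OF refl]) (simp add: G_def pre_pre suf_pre)
    finally show "pmult f g (pre z i) * h (suf z i) = (\<Sum>j\<le>i. G j (i - j))" .
  qed
  also have "\<dots> = (\<Sum>(j,m)\<in>{(j,m). j + m \<le> n}. G j m)"
    by (rule sum.triangle_reindex_eq[symmetric])
  also have "\<dots> = (\<Sum>(j,m)\<in>Sigma {..n} (\<lambda>j. {..n - j}). G j m)"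
    by (rule sum.cong) auto
  also have "\<dots> = (\<Sum>j\<le>n. \<Sum>m\<le>n - j. G j m)"
    by (rule sum.Sigma[symmetric]) auto
  also have "\<dots> = (\<Sum>j\<le>n. f (pre z j) * pmult g h (suf z j))"
  proof (rule sum.cong[OF refl])
    fix j assume j: "j \<in> {..n}"
    have lj: "length (snd (suf z j)) = n - j" unfolding n_def suf_def by simp
    have "f (pre z j) * pmult g h (suf z j) = f (pre z j) * (\<Sum>m\<le>n - j. g (pre (suf z j) m) * h (suf (suf z j) m))"
      using pmult_formula[OF g h, of "suf z j"] lj by simp
    also have "\<dots> = (\<Sum>m\<le>n - j. G j m)"
      by (simp add: sum_distrib_left G_def suf_suf mult.assoc)
    finally show "(\<Sum>m\<le>n - j. G j m) = f (pre z j) * pmult g h (suf z j)" by simp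
  qed
  also have "\<dots> = pmult f (pmult g h) z"
    unfolding n_def by (rule pmult_formula[OF f gh, symmetric])
  finally show "pmult (pmult f g) h z = pmult f (pmult g h) z" .
qed

lemma KQ_iff: "f \<in> KQ \<longleftrightarrow> finite (supp f) \<and> (\<forall>z\<in>supp f. valid_path z)"
  unfolding KQ_def by simp

lemma KQ_finite: "f \<in> KQ \<Longrightarrow> finite (supp f)"
  unfolding KQ_iff by simp

lemma supp_add: "supp (f + g) \<subseteq> supp f \<union> supp (g :: qpath \<Rightarrow> 'k::field)"
  unfolding supp_def by (auto simp: plus_fun_def)

lemma supp_uminus: "supp (- f) = supp (f :: qpath \<Rightarrow> 'k::field)"
  unfolding supp_def by (auto simp: fun_Compl_def)

lemma supp_zero: "supp 0 = {}"
  unfolding supp_def by auto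

lemma KQ_add: "f \<in> KQ \<Longrightarrow> g \<in> KQ \<Longrightarrow> f + g \<in> KQ"
  unfolding KQ_iff using finite_subset[OF supp_add] supp_add by blast

lemma KQ_uminus: "f \<in> KQ \<Longrightarrow> - f \<in> KQ"
  unfolding KQ_iff supp_uminus by simp

lemma KQ_zero: "0 \<in> KQ"
  unfolding KQ_iff supp_zero by simp

lemma KQ_diff: "f \<in> KQ \<Longrightarrow> g \<in> KQ \<Longrightarrow> f - g \<in> KQ"
proof -
  assume "f \<in> KQ" "g \<in> KQ"
  then have "f + (- g) \<in> KQ" by (intro KQ_add KQ_uminus)
  then show ?thesis by simp
qed

lemma KQ_pmult: "f \<in> KQ \<Longrightarrow> g \<in> KQ \<Longrightarrow> pmult f g \<in> KQ"
proof -
  assume f: "f \<in> KQ" and g: "g \<in> KQ"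
  have "valid_path z" if z: "z \<in> supp (pmult f g)" for z
  proof -
    from z have "pmult f g z \<noteq> 0" unfolding supp_def by simp
    then obtain x y where xy: "x \<in> supp f" "y \<in> supp g" "pcomp x y = Some z"
      using pmult_nonzero_witness by blast
    then have "valid_path x" "valid_path y" using f g unfolding KQ_iff by auto
    then show ?thesis using xy(3) unfolding pcomp_Some_iff valid_path_def path_end_def
      by (auto simp: composable_append)
  qed
  then show ?thesis using f g finite_supp_pmult unfolding KQ_iff by blast
qed

definition oneK :: "qpath \<Rightarrow> 'k::field" where
  "oneK = basis (V1, []) + basis (V2, [])"

lemma oneK_eval: "oneK z = (if snd z = [] then 1 else 0)"
  unfolding oneK_def basis_def by (cases z; cases "fst z") auto

lemma supp_oneK: "supp oneK = {(V1, []), (V2, [])}"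
  unfolding supp_def oneK_eval by (auto; case_tac a; simp)

lemma KQ_oneK: "oneK \<in> KQ"
  unfolding KQ_iff supp_oneK by (simp add: valid_path_def)

lemma pmult_oneK_left: "finite (supp f) \<Longrightarrow> pmult oneK f = f"
proof
  fix z :: qpath assume f: "finite (supp f)"
  have "pmult oneK f z = (\<Sum>i\<le>length (snd z). oneK (pre z i) * f (suf z i))"
    by (rule pmult_formula) (simp_all add: f supp_oneK)
  also have "\<dots> = (\<Sum>i\<le>length (snd z). if i = 0 then f z else 0)"
    by (rule sum.cong[OF refl]) (auto simp: oneK_eval pre_def suf_def)
  also have "\<dots> = f z" by simp
  finally show "pmult oneK f z = f z" .
qed

lemma pmult_oneK_right: "finite (supp f) \<Longrightarrow> pmult f oneK = f"
proof
  fix z :: qpath assume f: "finite (supp f)"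
  have "pmult f oneK z = (\<Sum>i\<le>length (snd z). f (pre z i) * oneK (suf z i))"
    by (rule pmult_formula) (simp_all add: f supp_oneK)
  also have "\<dots> = (\<Sum>i\<le>length (snd z). if i = length (snd z) then f z else 0)"
    by (rule sum.cong[OF refl]) (auto simp: oneK_eval pre_def suf_def)
  also have "\<dots> = f z" by simp
  finally show "pmult f oneK z = f z" .
qed

lemma pmult_distrib_right:
  "finite (supp f) \<Longrightarrow> finite (supp g) \<Longrightarrow> finite (supp h) \<Longrightarrow> pmult (f + g) h = pmult f h + pmult g h"
proof
  fix z :: qpath
  assume f: "finite (supp f)" and g: "finite (supp g)" and h: "finite (supp h)"
  have fg: "finite (supp (f + g))" by (rule finite_subset[OF supp_add]) (simp add: f g)
  show "pmult (f + g) h z = (pmult f h + pmult g h) z"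
    using pmult_formula[OF fg h, of z] pmult_formula[OF f h, of z] pmult_formula[OF g h, of z]
    by (simp add: sum.distrib distrib_right)
qed

lemma pmult_distrib_left:
  "finite (supp f) \<Longrightarrow> finite (supp g) \<Longrightarrow> finite (supp h) \<Longrightarrow> pmult h (f + g) = pmult h f + pmult h g"
proof
  fix z :: qpath
  assume f: "finite (supp f)" and g: "finite (supp g)" and h: "finite (supp h)"
  have fg: "finite (supp (f + g))" by (rule finite_subset[OF supp_add]) (simp add: f g)
  show "pmult h (f + g) z = (pmult h f + pmult h g) z"
    using pmult_formula[OF h fg, of z] pmult_formula[OF h f, of z] pmult_formula[OF h g, of z]
    by (simp add: sum.distrib distrib_left)
qed

lemma kQ_simps [simp]: "carrier kQ = KQ" "monoid.mult kQ = pmult" "one kQ = oneK" "zero kQ = 0" "add kQ = (+)"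
  unfolding kQ_def oneK_def by simp_all

lemma abelian_kQ: "abelian_group (kQ :: (qpath \<Rightarrow> 'k::field) ring)"
proof (rule abelian_groupI)
  fix x :: "qpath \<Rightarrow> 'k" assume "x \<in> carrier kQ"
  then show "\<exists>y\<in>carrier kQ. y \<oplus>\<^bsub>kQ\<^esub> x = \<zero>\<^bsub>kQ\<^esub>"
    using KQ_uminus by (intro bexI[of _ "- x"]) simp_all
next
  fix x y z :: "qpath \<Rightarrow> 'k"
  show "x \<oplus>\<^bsub>kQ\<^esub> y \<oplus>\<^bsub>kQ\<^esub> z = x \<oplus>\<^bsub>kQ\<^esub> (y \<oplus>\<^bsub>kQ\<^esub> z)" by (simp add: add.assoc)
  show "x \<oplus>\<^bsub>kQ\<^esub> y = y \<oplus>\<^bsub>kQ\<^esub> x" by (simp add: add.commute)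
qed (simp_all add: KQ_add KQ_zero)

lemma monoid_kQ: "monoid (kQ :: (qpath \<Rightarrow> 'k::field) ring)"
proof (rule monoidI)
  fix x y z :: "qpath \<Rightarrow> 'k"
  assume "x \<in> carrier kQ" "y \<in> carrier kQ" "z \<in> carrier kQ"
  then show "x \<otimes>\<^bsub>kQ\<^esub> y \<otimes>\<^bsub>kQ\<^esub> z = x \<otimes>\<^bsub>kQ\<^esub> (y \<otimes>\<^bsub>kQ\<^esub> z)"
    by (simp add: pmult_assoc KQ_finite)
next
  fix x :: "qpath \<Rightarrow> 'k" assume "x \<in> carrier kQ"
  then show "\<one>\<^bsub>kQ\<^esub> \<otimes>\<^bsub>kQ\<^esub> x = x" "x \<otimes>\<^bsub>kQ\<^esub> \<one>\<^bsub>kQ\<^esub> = x"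
    by (simp_all add: pmult_oneK_left pmult_oneK_right KQ_finite)
qed (simp_all add: KQ_pmult KQ_oneK)

lemma ring_kQ: "ring (kQ :: (qpath \<Rightarrow> 'k::field) ring)"
proof (rule ringI[OF abelian_kQ monoid_kQ])
  fix x y z :: "qpath \<Rightarrow> 'k"
  assume "x \<in> carrier kQ" "y \<in> carrier kQ" "z \<in> carrier kQ"
  then have fin: "finite (supp x)" "finite (supp y)" "finite (supp z)" by (simp_all add: KQ_finite)
  show "(x \<oplus>\<^bsub>kQ\<^esub> y) \<otimes>\<^bsub>kQ\<^esub> z = x \<otimes>\<^bsub>kQ\<^esub> z \<oplus>\<^bsub>kQ\<^esub> y \<otimes>\<^bsub>kQ\<^esub> z"
    unfolding kQ_simps by (rule pmult_distrib_right[OF fin])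
  show "z \<otimes>\<^bsub>kQ\<^esub> (x \<oplus>\<^bsub>kQ\<^esub> y) = z \<otimes>\<^bsub>kQ\<^esub> x \<oplus>\<^bsub>kQ\<^esub> z \<otimes>\<^bsub>kQ\<^esub> y"
    unfolding kQ_simps by (rule pmult_distrib_left[OF fin])
qed

lemma pmult_len0:
  "finite (supp f) \<Longrightarrow> finite (supp g) \<Longrightarrow> pmult f g (v, []) = f (v, []) * g (v, [])"
  by (simp add: pmult_formula pre_def suf_def)

lemma pmult_len1:
  "finite (supp f) \<Longrightarrow> finite (supp g) \<Longrightarrow>
   pmult f g (v, [x]) = f (v, []) * g (v, [x]) + f (v, [x]) * g (tgt x, [])"
  by (simp add: pmult_formula pre_def suf_def)

lemma pmult_len2:
  "finite (supp f) \<Longrightarrow> finite (supp g) \<Longrightarrow>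
   pmult f g (v, [x, y]) = f (v, []) * g (v, [x, y]) + f (v, [x]) * g (tgt x, [y])
      + f (v, [x, y]) * g (tgt y, [])"
  by (simp add: pmult_formula pre_def suf_def numeral_2_eq_2)

section \<open>An ideal containing the relations\<close>

definition lowvan :: "(qpath \<Rightarrow> 'k::field) \<Rightarrow> bool" where
  "lowvan f \<longleftrightarrow> (\<forall>z. length (snd z) \<le> 1 \<longrightarrow> f z = 0)"

definition J :: "'k::field \<Rightarrow> (qpath \<Rightarrow> 'k) set" where
  "J p = {f \<in> KQ. lowvan f \<and> f (V1,[Aa,Ad]) = 0 \<and> f (V1,[Ac,Ab]) = 0 \<and>
     f (V1,[Aa,Ab]) + f (V1,[Ac,Ad]) = 0 \<and> f (V2,[Ab,Ac]) = 0 \<and> f (V2,[Ad,Aa]) = 0 \<and>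
     p * f (V2,[Ab,Aa]) + f (V2,[Ad,Ac]) = 0}"

lemma short_cases: "length l \<le> 1 \<Longrightarrow> l = [] \<or> (\<exists>x. l = [x])"
  by (cases l) auto

lemma lowvan_pmult_left:
  assumes "finite (supp g)" "finite (supp f)" "lowvan f"
  shows "lowvan (pmult g f)"
  unfolding lowvan_def
proof (intro allI impI)
  fix z :: qpath assume "length (snd z) \<le> 1"
  then obtain v l where z: "z = (v, l)" and "l = [] \<or> (\<exists>x. l = [x])"
    using short_cases by (cases z) auto
  then show "pmult g f z = 0" using assms
    by (auto simp: pmult_len0 pmult_len1 lowvan_def)
qed

lemma lowvan_pmult_right:
  assumes "finite (supp g)" "finite (supp f)" "lowvan f"
  shows "lowvan (pmult f g)"
  unfolding lowvan_def
proof (intro allI impI)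
  fix z :: qpath assume "length (snd z) \<le> 1"
  then obtain v l where z: "z = (v, l)" and "l = [] \<or> (\<exists>x. l = [x])"
    using short_cases by (cases z) auto
  then show "pmult f g z = 0" using assms
    by (auto simp: pmult_len0 pmult_len1 lowvan_def)
qed

lemma lowvan_len2_left:
  assumes "finite (supp g)" "finite (supp f)" "lowvan f"
  shows "pmult g f (v, [x, y]) = g (v, []) * f (v, [x, y])"
  using assms by (simp add: pmult_len2 lowvan_def)

lemma lowvan_len2_right:
  assumes "finite (supp g)" "finite (supp f)" "lowvan f"
  shows "pmult f g (v, [x, y]) = f (v, [x, y]) * g (tgt y, [])"
  using assms by (simp add: pmult_len2 lowvan_def)

lemma abelian_kQ_inv: "x \<in> KQ \<Longrightarrow> \<ominus>\<^bsub>kQ\<^esub> x = - x"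
  by (rule abelian_group.minus_equality[OF abelian_kQ]) (simp_all add: KQ_uminus)

lemma J_sub: "J p \<subseteq> KQ"
  unfolding J_def by auto

lemma ideal_J: "ideal (J p) (kQ :: (qpath \<Rightarrow> 'k::field) ring)"
proof (rule idealI[OF ring_kQ])
  show "subgroup (J p) (add_monoid (kQ :: (qpath \<Rightarrow> 'k::field) ring))"
  proof (rule subgroup.intro)
    show "J p \<subseteq> carrier (add_monoid (kQ :: (qpath \<Rightarrow> 'k::field) ring))"
      using J_sub by simp
    fix x y :: "qpath \<Rightarrow> 'k" assume x: "x \<in> J p" and y: "y \<in> J p"
    then show "x \<otimes>\<^bsub>add_monoid kQ\<^esub> y \<in> J p"
      unfolding J_def lowvan_def by (auto simp: KQ_add algebra_simps)
  next
    show "\<one>\<^bsub>add_monoid (kQ :: (qpath \<Rightarrow> 'k::field) ring)\<^esub> \<in> J p"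
      unfolding J_def lowvan_def by (simp add: KQ_zero)
  next
    fix x :: "qpath \<Rightarrow> 'k" assume x: "x \<in> J p"
    then have "inv\<^bsub>add_monoid kQ\<^esub> x = - x"
      using abelian_kQ_inv J_sub unfolding a_inv_def[symmetric] by blast
    moreover have "- x \<in> J p"
    proof -
      have e: "x (V1,[Aa,Ab]) + x (V1,[Ac,Ad]) = 0" "p * x (V2,[Ab,Aa]) + x (V2,[Ad,Ac]) = 0"
        using x unfolding J_def by auto
      have "(- x) (V1,[Aa,Ab]) + (- x) (V1,[Ac,Ad]) = - (x (V1,[Aa,Ab]) + x (V1,[Ac,Ad]))"
        "p * (- x) (V2,[Ab,Aa]) + (- x) (V2,[Ad,Ac]) = - (p * x (V2,[Ab,Aa]) + x (V2,[Ad,Ac]))"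
        by simp_all
      then have "(- x) (V1,[Aa,Ab]) + (- x) (V1,[Ac,Ad]) = 0"
        "p * (- x) (V2,[Ab,Aa]) + (- x) (V2,[Ad,Ac]) = 0"
        using e by simp_all
      then show ?thesis using x unfolding J_def lowvan_def by (auto simp: KQ_uminus)
    qed
    ultimately show "inv\<^bsub>add_monoid kQ\<^esub> x \<in> J p" by simp
  qed
next
  fix a x :: "qpath \<Rightarrow> 'k" assume a: "a \<in> J p" and x: "x \<in> carrier kQ"
  have aK: "a \<in> KQ" and la: "lowvan a" using a unfolding J_def by auto
  have fa: "finite (supp a)" and fx: "finite (supp x)" using aK x by (simp_all add: KQ_finite)
  show "x \<otimes>\<^bsub>kQ\<^esub> a \<in> J p"
    using a unfolding J_def
    using x by (simp add: KQ_pmult aK lowvan_pmult_left[OF fx fa la] lowvan_len2_left[OF fx fa la]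
        mult.left_commute[of p] flip: distrib_left)
  show "a \<otimes>\<^bsub>kQ\<^esub> x \<in> J p"
    using a unfolding J_def
    using x by (simp add: KQ_pmult aK lowvan_pmult_right[OF fx fa la] lowvan_len2_right[OF fx fa la]
        flip: distrib_right mult.assoc)
qed



lemma supp_basis: "supp (basis z :: qpath \<Rightarrow> 'k::field) = {z}"
  unfolding supp_def basis_def by auto

lemma basis_KQ: "valid_path z \<Longrightarrow> (basis z :: qpath \<Rightarrow> 'k::field) \<in> KQ"
  unfolding KQ_iff supp_basis by simp

lemma supp_smul: "supp (smul c f) \<subseteq> supp (f :: qpath \<Rightarrow> 'k::field)"
  unfolding supp_def smul_def by auto

lemma smul_KQ:
  assumes "f \<in> KQ" shows "smul c f \<in> KQ"
proof -
  have s: "supp (smul c f) \<subseteq> supp f" by (rule supp_smul)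
  from assms have "finite (supp f)" "\<forall>z\<in>supp f. valid_path z" unfolding KQ_iff by auto
  with s show ?thesis unfolding KQ_iff using finite_subset[OF s] by auto
qed

lemma arr_KQ: "(arr x :: qpath \<Rightarrow> 'k::field) \<in> KQ"
  unfolding arr_def by (rule basis_KQ) (simp add: valid_path_def)

lemma idem_KQ: "(idem v :: qpath \<Rightarrow> 'k::field) \<in> KQ"
  unfolding idem_def by (rule basis_KQ) (simp add: valid_path_def)

lemma path2_KQ: "tgt x = src y \<Longrightarrow> (path2 x y :: qpath \<Rightarrow> 'k::field) \<in> KQ"
  unfolding path2_def by (rule basis_KQ) (simp add: valid_path_def)

lemma pmult_basis:
  "pmult (basis u) (basis w) = (if path_end u = fst w then basis (fst u, snd u @ snd w) else (0 :: qpath \<Rightarrow> 'k::field))"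
  unfolding pmult_def supp_basis
  by (rule ext) (simp add: pcomp_def basis_def)

lemma pmult_arr: "tgt x = src y \<Longrightarrow> pmult (arr x) (arr y) = (path2 x y :: qpath \<Rightarrow> 'k::field)"
  unfolding arr_def path2_def pmult_basis by (simp add: path_end_def)

section \<open>The relation ideal and residue classes\<close>

lemma gens_KQ: "{path2 Aa Ab - path2 Ac Ad, path2 Ab Aa - smul q (path2 Ad Ac)} \<subseteq> (KQ :: (qpath \<Rightarrow> 'k::field) set)"
proof -
  have "path2 Aa Ab - path2 Ac Ad \<in> (KQ :: (qpath \<Rightarrow> 'k::field) set)"
    by (intro KQ_diff path2_KQ) simp_all
  moreover have "path2 Ab Aa - smul q (path2 Ad Ac) \<in> (KQ :: (qpath \<Rightarrow> 'k::field) set)"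
    by (intro KQ_diff smul_KQ path2_KQ) simp_all
  ultimately show ?thesis by simp
qed

lemma ideal_Rel: "ideal (Rel q) (kQ :: (qpath \<Rightarrow> 'k::field) ring)"
  unfolding Rel_def by (rule ring.genideal_ideal[OF ring_kQ]) (use gens_KQ in simp)

lemma gens_Rel:
  "path2 Aa Ab - path2 Ac Ad \<in> Rel (q :: 'k::field)"
  "path2 Ab Aa - smul q (path2 Ad Ac) \<in> Rel (q :: 'k::field)"
proof -
  have "{path2 Aa Ab - path2 Ac Ad, path2 Ab Aa - smul q (path2 Ad Ac)} \<subseteq> carrier (kQ :: (qpath \<Rightarrow> 'k::field) ring)"
    using gens_KQ by simp
  from ring.genideal_self[OF ring_kQ this] show
    "path2 Aa Ab - path2 Ac Ad \<in> Rel (q :: 'k::field)"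
    "path2 Ab Aa - smul q (path2 Ad Ac) \<in> Rel (q :: 'k::field)"
    unfolding Rel_def by auto
qed

lemma gens_J: "{path2 Aa Ab - path2 Ac Ad, path2 Ab Aa - smul q (path2 Ad Ac)} \<subseteq> J (q :: 'k::field)"
proof -
  have "path2 Aa Ab - path2 Ac Ad \<in> J q" "path2 Ab Aa - smul q (path2 Ad Ac) \<in> J q"
    using gens_KQ[of q] unfolding J_def lowvan_def
    by (auto simp: path2_def basis_def smul_def)
  then show ?thesis by simp
qed

lemma Rel_J: "Rel q \<subseteq> J (q :: 'k::field)"
  unfolding Rel_def by (rule ring.genideal_minimal[OF ring_kQ ideal_J gens_J])

lemma cls_eta: "cls q = a_r_coset kQ (Rel q)"
  by (rule ext) (simp add: cls_def)

lemma cls_hom: "cls q \<in> ring_hom (kQ :: (qpath \<Rightarrow> 'k::field) ring) (Aq q)"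
  unfolding cls_eta Aq_def by (rule ideal.rcos_ring_hom[OF ideal_Rel])

lemma ring_Aq: "ring (Aq (q :: 'k::field))"
  unfolding Aq_def by (rule ideal.quotient_is_ring[OF ideal_Rel])

lemma cls_carrier: "x \<in> KQ \<Longrightarrow> cls q (x :: qpath \<Rightarrow> 'k::field) \<in> carrier (Aq q)"
  using ring_hom_closed[OF cls_hom] by simp

lemma cls_add: "x \<in> KQ \<Longrightarrow> y \<in> KQ \<Longrightarrow> cls q (x + y) = cls q x \<oplus>\<^bsub>Aq q\<^esub> cls q (y :: qpath \<Rightarrow> 'k::field)"
  using ring_hom_add[OF cls_hom, of x y q] by simp

lemma cls_mult: "x \<in> KQ \<Longrightarrow> y \<in> KQ \<Longrightarrow> cls q (pmult x y) = cls q x \<otimes>\<^bsub>Aq q\<^esub> cls q (y :: qpath \<Rightarrow> 'k::field)"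
  using ring_hom_mult[OF cls_hom, of x y q] by simp

lemma cls_zero: "cls q (0 :: qpath \<Rightarrow> 'k::field) = \<zero>\<^bsub>Aq q\<^esub>"
  using ring_hom_zero[OF cls_hom ring_kQ ring_Aq] by simp

lemma cls_Rel: "h \<in> Rel q \<Longrightarrow> cls q (h :: qpath \<Rightarrow> 'k::field) = \<zero>\<^bsub>Aq q\<^esub>"
proof -
  assume h: "h \<in> Rel q"
  interpret I: ideal "Rel q" "kQ :: (qpath \<Rightarrow> 'k) ring" by (rule ideal_Rel)
  have "cls q h = Rel q" unfolding cls_def
    using I.a_rcos_const[OF h] .
  then show ?thesis unfolding Aq_def FactRing_def by simp
qed

lemma cls_eqI:
  assumes "x \<in> KQ" "y \<in> KQ" "x - y \<in> Rel q"
  shows "cls q x = cls q (y :: qpath \<Rightarrow> 'k::field)"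
proof -
  have "cls q x = cls q (y + (x - y))" by simp
  also have "\<dots> = cls q y \<oplus>\<^bsub>Aq q\<^esub> cls q (x - y)"
    by (rule cls_add) (simp_all add: assms KQ_diff)
  also have "\<dots> = cls q y" using cls_Rel[OF assms(3)] ring.ring_simprules(15)[OF ring_Aq cls_carrier[OF assms(2)]]
    by simp
  finally show ?thesis .
qed

lemma cls_eqD:
  assumes "x \<in> KQ" "y \<in> KQ" "cls q x = cls q (y :: qpath \<Rightarrow> 'k::field)"
  shows "x - y \<in> Rel q"
proof -
  interpret I: ideal "Rel q" "kQ :: (qpath \<Rightarrow> 'k) ring" by (rule ideal_Rel)
  have "x \<in> cls q x" unfolding cls_def
    using I.a_rcos_self assms(1) by simp
  then have "x \<in> cls q y" using assms(3) by simp
  then obtain h where h: "h \<in> Rel q" "x = h + y"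
    unfolding cls_def a_r_coset_def' by auto
  then show ?thesis by simp
qed

definition lc :: "arrow \<Rightarrow> arrow \<Rightarrow> 'k::field \<Rightarrow> 'k \<Rightarrow> qpath \<Rightarrow> 'k" where
  "lc x y k1 k2 = smul k1 (arr x) + smul k2 (arr y)"

lemma lc_eval: "lc x y k1 k2 z = (if z = (src x, [x]) then k1 else 0) + (if z = (src y, [y]) then k2 else 0)"
  unfolding lc_def by (simp add: smul_def arr_def basis_def)

lemma lc_KQ: "lc x y k1 k2 \<in> KQ"
  unfolding lc_def by (intro KQ_add smul_KQ arr_KQ)

lemma lc_finite: "finite (supp (lc x y k1 k2))"
  using lc_KQ KQ_finite by blast

lemma Phi_hom: "alg_iso q p \<Phi> \<Longrightarrow> \<Phi> \<in> ring_hom (Aq q) (Aq p)"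
  unfolding alg_iso_def ring_iso_def by simp

lemma Phi_bij: "alg_iso q p \<Phi> \<Longrightarrow> bij_betw \<Phi> (carrier (Aq q)) (carrier (Aq p))"
  unfolding alg_iso_def ring_iso_def by simp

lemma Phi_smul: "alg_iso q p \<Phi> \<Longrightarrow> x \<in> KQ \<Longrightarrow> y \<in> KQ \<Longrightarrow> \<Phi> (cls q x) = cls p y \<Longrightarrow>
  \<Phi> (cls q (smul c x)) = cls p (smul c y)"
  unfolding alg_iso_def by blast

lemma Phi_zero:
  assumes "alg_iso q p \<Phi>"
  shows "\<Phi> (cls q 0) = cls p (0 :: qpath \<Rightarrow> 'k::field)"
  using ring_hom_zero[OF Phi_hom[OF assms] ring_Aq ring_Aq] by (simp add: cls_zero)

lemma Phi_inj:
  assumes "alg_iso q p \<Phi>" "x \<in> KQ" "\<Phi> (cls q x) = cls p (0 :: qpath \<Rightarrow> 'k::field)"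
  shows "x \<in> Rel q"
proof -
  have "\<Phi> (cls q x) = \<Phi> (cls q 0)" using assms Phi_zero by metis
  moreover have "cls q x \<in> carrier (Aq q)" "cls q (0 :: qpath \<Rightarrow> 'k) \<in> carrier (Aq q)"
    by (rule cls_carrier[OF assms(2)], rule cls_carrier[OF KQ_zero])
  ultimately have "cls q x = cls q 0"
    using Phi_bij[OF assms(1)] unfolding bij_betw_def inj_on_def by blast
  then have "x - 0 \<in> Rel q" by (rule cls_eqD[OF assms(2) KQ_zero])
  then show ?thesis by simp
qed

lemma Phi_add:
  assumes "alg_iso q p \<Phi>" "x1 \<in> KQ" "x2 \<in> KQ" "y1 \<in> KQ" "y2 \<in> KQ"
    "\<Phi> (cls q x1) = cls p y1" "\<Phi> (cls q x2) = cls p (y2 :: qpath \<Rightarrow> 'k::field)"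
  shows "\<Phi> (cls q (x1 + x2)) = cls p (y1 + y2)"
proof -
  have "\<Phi> (cls q (x1 + x2)) = \<Phi> (cls q x1 \<oplus>\<^bsub>Aq q\<^esub> cls q x2)"
    using assms by (simp add: cls_add)
  also have "\<dots> = \<Phi> (cls q x1) \<oplus>\<^bsub>Aq p\<^esub> \<Phi> (cls q x2)"
    by (rule ring_hom_add[OF Phi_hom[OF assms(1)]]) (simp_all add: assms cls_carrier)
  also have "\<dots> = cls p (y1 + y2)" using assms by (simp add: cls_add)
  finally show ?thesis .
qed

lemma Phi_prod:
  assumes "alg_iso q p \<Phi>" "x1 \<in> KQ" "x2 \<in> KQ" "y1 \<in> KQ" "y2 \<in> KQ"
    "\<Phi> (cls q x1) = cls p y1" "\<Phi> (cls q x2) = cls p (y2 :: qpath \<Rightarrow> 'k::field)"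
  shows "\<Phi> (cls q (pmult x1 x2)) = cls p (pmult y1 y2)"
proof -
  have "\<Phi> (cls q (pmult x1 x2)) = \<Phi> (cls q x1 \<otimes>\<^bsub>Aq q\<^esub> cls q x2)"
    using assms by (simp add: cls_mult)
  also have "\<dots> = \<Phi> (cls q x1) \<otimes>\<^bsub>Aq p\<^esub> \<Phi> (cls q x2)"
    by (rule ring_hom_mult[OF Phi_hom[OF assms(1)]]) (simp_all add: assms cls_carrier)
  also have "\<dots> = cls p (pmult y1 y2)" using assms by (simp add: cls_mult)
  finally show ?thesis .
qed

lemma Phi_lc:
  assumes "alg_iso q p \<Phi>" "y1 \<in> KQ" "y2 \<in> KQ"
    "\<Phi> (cls q (arr x)) = cls p y1" "\<Phi> (cls q (arr y)) = cls p (y2 :: qpath \<Rightarrow> 'k::field)"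
  shows "\<Phi> (cls q (lc x y \<alpha> \<beta>)) = cls p (smul \<alpha> y1 + smul \<beta> y2)"
  unfolding lc_def
  by (rule Phi_add[OF assms(1)])
     (simp_all add: smul_KQ arr_KQ assms Phi_smul[OF assms(1) arr_KQ])

lemma indep:
  assumes "alg_iso q p \<Phi>" "x \<noteq> y"
    "\<Phi> (cls q (arr x)) = cls p (lc x y k1 k2)" "\<Phi> (cls q (arr y)) = cls p (lc x y k3 (k4 :: 'k::field))"
    "\<alpha> * k1 + \<beta> * k3 = 0" "\<alpha> * k2 + \<beta> * k4 = 0"
  shows "\<alpha> = 0 \<and> \<beta> = 0"
proof -
  have "smul \<alpha> (lc x y k1 k2) + smul \<beta> (lc x y k3 k4) = 0"
  proof
    fix z :: qpath
    show "(smul \<alpha> (lc x y k1 k2) + smul \<beta> (lc x y k3 k4)) z = 0 z"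
      using assms(2,5,6) by (auto simp: lc_eval smul_def algebra_simps)
  qed
  then have "\<Phi> (cls q (lc x y \<alpha> \<beta>)) = cls p 0"
    using Phi_lc[OF assms(1) lc_KQ lc_KQ assms(3,4)] by simp
  then have "lc x y \<alpha> \<beta> \<in> Rel q" by (rule Phi_inj[OF assms(1) lc_KQ])
  then have "lc x y \<alpha> \<beta> \<in> J q" using Rel_J by blast
  then have "lowvan (lc x y \<alpha> \<beta>)" unfolding J_def by simp
  then have "lc x y \<alpha> \<beta> (src x, [x]) = 0" "lc x y \<alpha> \<beta> (src y, [y]) = 0"
    unfolding lowvan_def by simp_all
  then show ?thesis using assms(2) by (simp add: lc_eval)
qed

lemma arr_piece: "cls q (arr x) \<in> Apiece (q :: 'k::field) (src x) 1 (tgt x)"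
  unfolding Apiece_def
  by (rule imageI) (simp add: arr_def basis_KQ valid_path_def supp_basis path_end_def)

lemma idem_piece: "cls q (idem v) \<in> Apiece (q :: 'k::field) v 0 v"
  unfolding Apiece_def
  by (rule imageI) (simp add: idem_def basis_KQ valid_path_def supp_basis path_end_def)

lemma from_piece:
  assumes "w \<in> Apiece (p :: 'k::field) u n v"
  obtains y where "y \<in> KQ" "\<forall>z\<in>supp y. fst z = u \<and> length (snd z) = n \<and> path_end z = v" "w = cls p y"
  using assms unfolding Apiece_def by blast

lemma vert_cases: "(v :: vert) = V1 \<or> v = V2"
  by (cases v) auto

lemma sigma_id:
  assumes "graded_iso q p \<Phi>" "type_I q p \<Phi>"
  obtains \<sigma> where "bij \<sigma>" "\<And>u n v. \<Phi> ` Apiece q u n v = Apiece p (\<sigma> u) n (\<sigma> v)"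
    "\<sigma> V1 = V1" "\<sigma> V2 = V2"
proof -
  from assms(1) obtain \<sigma> where bij: "bij \<sigma>" and pc: "\<And>u n v. \<Phi> ` Apiece q u n v = Apiece p (\<sigma> u) n (\<sigma> v)"
    unfolding graded_iso_def by blast
  have "\<Phi> (cls q (idem V1)) \<in> Apiece p (\<sigma> V1) 0 (\<sigma> V1)"
    using pc[of V1 0 V1] idem_piece[of q V1] by blast
  then have "cls p (idem V1) \<in> Apiece p (\<sigma> V1) 0 (\<sigma> V1)"
    using assms(2) unfolding type_I_def by simp
  then obtain y where y: "y \<in> KQ" "\<forall>z\<in>supp y. fst z = \<sigma> V1 \<and> length (snd z) = 0 \<and> path_end z = \<sigma> V1"
    "cls p (idem V1) = cls p y"
    by (rule from_piece)
  have "idem V1 - y \<in> Rel p" by (rule cls_eqD[OF idem_KQ y(1) y(3)])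
  then have "idem V1 - y \<in> J p" using Rel_J by blast
  then have "(idem V1 - y) (V1, []) = 0" unfolding J_def lowvan_def by simp
  then have "y (V1, []) = 1" by (simp add: idem_def basis_def)
  then have "(V1, []) \<in> supp y" unfolding supp_def by simp
  then have s1: "\<sigma> V1 = V1" using y(2) by fastforce
  have "\<sigma> V2 \<noteq> \<sigma> V1" using bij unfolding bij_def inj_def by blast
  then have s2: "\<sigma> V2 = V2" using s1 vert_cases[of "\<sigma> V2"] by simp
  show ?thesis by (rule that[OF bij pc s1 s2])
qed

lemma arrow_image:
  assumes "graded_iso q p \<Phi>" "type_I q p \<Phi>"
  obtains y where "y \<in> KQ" "\<forall>z\<in>supp y. fst z = src x \<and> length (snd z) = 1 \<and> path_end z = tgt x"
    "\<Phi> (cls q (arr x)) = cls p (y :: qpath \<Rightarrow> 'k::field)"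
proof -
  obtain \<sigma> where pc: "\<And>u n v. \<Phi> ` Apiece q u n v = Apiece p (\<sigma> u) n (\<sigma> v)"
    and s: "\<sigma> V1 = V1" "\<sigma> V2 = V2"
    using sigma_id[OF assms] by metis
  have sid: "\<sigma> v = v" for v using s vert_cases[of v] by auto
  have "\<Phi> (cls q (arr x)) \<in> Apiece p (src x) 1 (tgt x)"
    using pc[of "src x" 1 "tgt x"] arr_piece[of q x] unfolding sid by blast
  then obtain y where "y \<in> KQ" "\<forall>z\<in>supp y. fst z = src x \<and> length (snd z) = 1 \<and> path_end z = tgt x"
    "\<Phi> (cls q (arr x)) = cls p y" by (rule from_piece)
  then show ?thesis by (rule that)
qed

lemma repr:
  assumes "f \<in> KQ" "\<forall>z\<in>supp f. fst z = u \<and> length (snd z) = 1 \<and> path_end z = v"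
    "\<And>w. src w = u \<Longrightarrow> tgt w = v \<Longrightarrow> w = x \<or> w = y" "src x = u" "src y = u" "x \<noteq> y"
  shows "f = lc x y (f (u, [x])) (f (u, [y :: arrow]) :: 'k::field)"
proof
  fix z :: qpath
  show "f z = lc x y (f (u, [x])) (f (u, [y])) z"
  proof (cases "f z = 0")
    case True
    then show ?thesis using assms(4-6) by (auto simp: lc_eval)
  next
    case False
    then have zs: "z \<in> supp f" unfolding supp_def by simp
    then have c: "fst z = u" "length (snd z) = 1" "path_end z = v" using assms(2) by auto
    have vp: "valid_path z" using zs assms(1) unfolding KQ_iff by auto
    obtain w where zw: "z = (u, [w])" using c by (cases z; cases "snd z") auto
    have "src w = u" "tgt w = v" using vp c unfolding zw valid_path_def path_end_def by auto
    then have "w = x \<or> w = y" by (rule assms(3))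
    then show ?thesis using assms(4-6) zw by (auto simp: lc_eval)
  qed
qed

lemma arrow_lc:
  assumes "graded_iso q p \<Phi>" "type_I q p \<Phi>"
  shows "\<exists>k1 k2. \<Phi> (cls q (arr Aa)) = cls p (lc Aa Ac k1 (k2 :: 'k::field))"
    "\<exists>k1 k2. \<Phi> (cls q (arr Ac)) = cls p (lc Aa Ac k1 (k2 :: 'k::field))"
    "\<exists>k1 k2. \<Phi> (cls q (arr Ab)) = cls p (lc Ab Ad k1 (k2 :: 'k::field))"
    "\<exists>k1 k2. \<Phi> (cls q (arr Ad)) = cls p (lc Ab Ad k1 (k2 :: 'k::field))"
proof -
  have A: "\<And>w. src w = V1 \<Longrightarrow> tgt w = V2 \<Longrightarrow> w = Aa \<or> w = Ac"
    and B: "\<And>w. src w = V2 \<Longrightarrow> tgt w = V1 \<Longrightarrow> w = Ab \<or> w = Ad"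
    by (case_tac w; simp)+
  show "\<exists>k1 k2. \<Phi> (cls q (arr Aa)) = cls p (lc Aa Ac k1 (k2 :: 'k::field))"
  proof -
    obtain y where y: "y \<in> KQ" "\<forall>z\<in>supp y. fst z = src Aa \<and> length (snd z) = 1 \<and> path_end z = tgt Aa"
      "\<Phi> (cls q (arr Aa)) = cls p (y :: qpath \<Rightarrow> 'k::field)" by (rule arrow_image[OF assms])
    have "y = lc Aa Ac (y (V1, [Aa])) (y (V1, [Ac]))" by (rule repr[OF y(1), where u=V1 and v=V2]) (use y(2) A in simp_all)
    then show ?thesis using y(3) by metis
  qed
  show "\<exists>k1 k2. \<Phi> (cls q (arr Ac)) = cls p (lc Aa Ac k1 (k2 :: 'k::field))"
  proof -
    obtain y where y: "y \<in> KQ" "\<forall>z\<in>supp y. fst z = src Ac \<and> length (snd z) = 1 \<and> path_end z = tgt Ac"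
      "\<Phi> (cls q (arr Ac)) = cls p (y :: qpath \<Rightarrow> 'k::field)" by (rule arrow_image[OF assms])
    have "y = lc Aa Ac (y (V1, [Aa])) (y (V1, [Ac]))" by (rule repr[OF y(1), where u=V1 and v=V2]) (use y(2) A in simp_all)
    then show ?thesis using y(3) by metis
  qed
  show "\<exists>k1 k2. \<Phi> (cls q (arr Ab)) = cls p (lc Ab Ad k1 (k2 :: 'k::field))"
  proof -
    obtain y where y: "y \<in> KQ" "\<forall>z\<in>supp y. fst z = src Ab \<and> length (snd z) = 1 \<and> path_end z = tgt Ab"
      "\<Phi> (cls q (arr Ab)) = cls p (y :: qpath \<Rightarrow> 'k::field)" by (rule arrow_image[OF assms])
    have "y = lc Ab Ad (y (V2, [Ab])) (y (V2, [Ad]))" by (rule repr[OF y(1), where u=V2 and v=V1]) (use y(2) B in simp_all)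
    then show ?thesis using y(3) by metis
  qed
  show "\<exists>k1 k2. \<Phi> (cls q (arr Ad)) = cls p (lc Ab Ad k1 (k2 :: 'k::field))"
  proof -
    obtain y where y: "y \<in> KQ" "\<forall>z\<in>supp y. fst z = src Ad \<and> length (snd z) = 1 \<and> path_end z = tgt Ad"
      "\<Phi> (cls q (arr Ad)) = cls p (y :: qpath \<Rightarrow> 'k::field)" by (rule arrow_image[OF assms])
    have "y = lc Ab Ad (y (V2, [Ab])) (y (V2, [Ad]))" by (rule repr[OF y(1), where u=V2 and v=V1]) (use y(2) B in simp_all)
    then show ?thesis using y(3) by metis
  qed
qed

lemma det_nonzero:
  assumes "alg_iso q p \<Phi>" "x \<noteq> y"
    "\<Phi> (cls q (arr x)) = cls p (lc x y k1 k2)" "\<Phi> (cls q (arr y)) = cls p (lc x y k3 (k4 :: 'k::field))"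
  shows "k1 * k4 - k2 * k3 \<noteq> 0"
proof
  assume d: "k1 * k4 - k2 * k3 = 0"
  have "k4 = 0 \<and> - k2 = 0" by (rule indep[OF assms]) (use d in \<open>simp_all add: algebra_simps\<close>)
  moreover have "- k3 = 0 \<and> k1 = 0" by (rule indep[OF assms]) (use d in \<open>simp_all add: algebra_simps\<close>)
  ultimately have "k1 = 0" "k2 = 0" "k3 = 0" "k4 = 0" by simp_all
  then have "(1::'k) = 0 \<and> (0::'k) = 0" by (intro indep[OF assms]) simp_all
  then show False by simp
qed

section \<open>The relations under the isomorphism\<close>

lemma rel1:
  assumes "alg_iso q p \<Phi>"
    "\<Phi> (cls q (arr Aa)) = cls p (lc Aa Ac k1 k2)" "\<Phi> (cls q (arr Ab)) = cls p (lc Ab Ad l1 l2)"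
    "\<Phi> (cls q (arr Ac)) = cls p (lc Aa Ac k3 k4)" "\<Phi> (cls q (arr Ad)) = cls p (lc Ab Ad l3 (l4 :: 'k::field))"
  shows "pmult (lc Aa Ac k1 k2) (lc Ab Ad l1 l2) - pmult (lc Aa Ac k3 k4) (lc Ab Ad l3 l4) \<in> J p"
proof -
  have "cls q (path2 Aa Ab) = cls q (path2 Ac Ad :: qpath \<Rightarrow> 'k)"
    by (rule cls_eqI[OF path2_KQ path2_KQ gens_Rel(1)]) simp_all
  then have "cls q (pmult (arr Aa) (arr Ab)) = cls q (pmult (arr Ac) (arr Ad) :: qpath \<Rightarrow> 'k)"
    by (simp add: pmult_arr)
  moreover have "\<Phi> (cls q (pmult (arr Aa) (arr Ab))) = cls p (pmult (lc Aa Ac k1 k2) (lc Ab Ad l1 l2))"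
    by (rule Phi_prod[OF assms(1) arr_KQ arr_KQ lc_KQ lc_KQ assms(2,3)])
  moreover have "\<Phi> (cls q (pmult (arr Ac) (arr Ad))) = cls p (pmult (lc Aa Ac k3 k4) (lc Ab Ad l3 l4))"
    by (rule Phi_prod[OF assms(1) arr_KQ arr_KQ lc_KQ lc_KQ assms(4,5)])
  ultimately have "cls p (pmult (lc Aa Ac k1 k2) (lc Ab Ad l1 l2)) = cls p (pmult (lc Aa Ac k3 k4) (lc Ab Ad l3 l4))"
    by simp
  then have "pmult (lc Aa Ac k1 k2) (lc Ab Ad l1 l2) - pmult (lc Aa Ac k3 k4) (lc Ab Ad l3 l4) \<in> Rel p"
    by (rule cls_eqD[OF KQ_pmult[OF lc_KQ lc_KQ] KQ_pmult[OF lc_KQ lc_KQ]])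
  then show ?thesis using Rel_J by blast
qed

lemma rel2:
  assumes "alg_iso q p \<Phi>"
    "\<Phi> (cls q (arr Aa)) = cls p (lc Aa Ac k1 k2)" "\<Phi> (cls q (arr Ab)) = cls p (lc Ab Ad l1 l2)"
    "\<Phi> (cls q (arr Ac)) = cls p (lc Aa Ac k3 k4)" "\<Phi> (cls q (arr Ad)) = cls p (lc Ab Ad l3 (l4 :: 'k::field))"
  shows "pmult (lc Ab Ad l1 l2) (lc Aa Ac k1 k2) - smul q (pmult (lc Ab Ad l3 l4) (lc Aa Ac k3 k4)) \<in> J p"
proof -
  have "cls q (path2 Ab Aa) = cls q (smul q (path2 Ad Ac) :: qpath \<Rightarrow> 'k)"
    by (rule cls_eqI[OF path2_KQ smul_KQ[OF path2_KQ] gens_Rel(2)]) simp_all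
  then have e: "cls q (pmult (arr Ab) (arr Aa)) = cls q (smul q (pmult (arr Ad) (arr Ac)) :: qpath \<Rightarrow> 'k)"
    by (simp add: pmult_arr)
  have "\<Phi> (cls q (pmult (arr Ab) (arr Aa))) = cls p (pmult (lc Ab Ad l1 l2) (lc Aa Ac k1 k2))"
    by (rule Phi_prod[OF assms(1) arr_KQ arr_KQ lc_KQ lc_KQ assms(3,2)])
  moreover have "\<Phi> (cls q (pmult (arr Ad) (arr Ac))) = cls p (pmult (lc Ab Ad l3 l4) (lc Aa Ac k3 k4))"
    by (rule Phi_prod[OF assms(1) arr_KQ arr_KQ lc_KQ lc_KQ assms(5,4)])
  then have "\<Phi> (cls q (smul q (pmult (arr Ad) (arr Ac)))) = cls p (smul q (pmult (lc Ab Ad l3 l4) (lc Aa Ac k3 k4)))"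
    by (rule Phi_smul[OF assms(1) KQ_pmult[OF arr_KQ arr_KQ] KQ_pmult[OF lc_KQ lc_KQ]])
  ultimately have "cls p (pmult (lc Ab Ad l1 l2) (lc Aa Ac k1 k2)) = cls p (smul q (pmult (lc Ab Ad l3 l4) (lc Aa Ac k3 k4)))"
    using e by simp
  then have "pmult (lc Ab Ad l1 l2) (lc Aa Ac k1 k2) - smul q (pmult (lc Ab Ad l3 l4) (lc Aa Ac k3 k4)) \<in> Rel p"
    by (rule cls_eqD[OF KQ_pmult[OF lc_KQ lc_KQ] smul_KQ[OF KQ_pmult[OF lc_KQ lc_KQ]]])
  then show ?thesis using Rel_J by blast
qed

lemma final_alg:
  fixes p q k1 k2 k3 k4 l1 l2 l3 l4 :: "'k::field"
  assumes q1: "q \<noteq> 1" and k1: "k1 \<noteq> 0" and k4: "k4 \<noteq> 0"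
    and n1: "l1 \<noteq> 0 \<or> l2 \<noteq> 0" and n2: "l3 \<noteq> 0 \<or> l4 \<noteq> 0"
    and e1: "k1 * l2 - k3 * l4 = 0" and e2: "k2 * l1 - k4 * l3 = 0"
    and e3: "(k1 * l1 - k3 * l3) + (k2 * l2 - k4 * l4) = 0"
    and f1: "l1 * k2 - q * (l3 * k4) = 0" and f2: "l2 * k1 - q * (l4 * k3) = 0"
    and f3: "p * (l1 * k1 - q * (l3 * k3)) + (l2 * k2 - q * (l4 * k4)) = 0"
  shows "p = q"
proof -
  have "(1 - q) * (l3 * k4) = 0" using e2 f1 by (simp add: algebra_simps)
  then have l3: "l3 = 0" using q1 k4 by simp
  have "(1 - q) * (k3 * l4) = 0" using e1 f2 by (simp add: algebra_simps)
  then have "k3 * l4 = 0" using q1 by simp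
  then have "k1 * l2 = 0" using e1 by simp
  then have l2: "l2 = 0" using k1 by simp
  have l1: "l1 \<noteq> 0" using n1 l2 by simp
  have l4: "l4 \<noteq> 0" using n2 l3 by simp
  have k2: "k2 = 0" using e2 l3 l1 by simp
  have k3: "k3 = 0" using \<open>k3 * l4 = 0\<close> l4 by simp
  have a: "k1 * l1 = k4 * l4" using e3 k2 k3 l2 l3 by simp
  have "p * (k1 * l1) = q * (k4 * l4)" using f3 k2 k3 l2 l3 by (simp add: algebra_simps)
  then have "p * (k1 * l1) = q * (k1 * l1)" using a by simp
  moreover have "k1 * l1 \<noteq> 0" using k1 l1 by simp
  ultimately show "p = q" by simp
qed

lemma second_part:
  fixes p q k1 k2 k3 k4 l1 l2 l3 l4 :: "'k::field"
  assumes iso: "alg_iso q p \<Phi>" and q1: "q \<noteq> 1"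
    and a: "\<Phi> (cls q (arr Aa)) = cls p (lc Aa Ac k1 k2)" and b: "\<Phi> (cls q (arr Ab)) = cls p (lc Ab Ad l1 l2)"
    and c: "\<Phi> (cls q (arr Ac)) = cls p (lc Aa Ac k3 k4)" and d: "\<Phi> (cls q (arr Ad)) = cls p (lc Ab Ad l3 l4)"
    and k1: "k1 \<noteq> 0" and k4: "k4 \<noteq> 0"
  shows "p = q"
proof (rule final_alg[OF q1 k1 k4])
  show "l1 \<noteq> 0 \<or> l2 \<noteq> 0"
  proof (rule ccontr)
    assume "\<not> (l1 \<noteq> 0 \<or> l2 \<noteq> 0)"
    then have "(1::'k) = 0 \<and> (0::'k) = 0" by (intro indep[OF iso _ b d]) simp_all
    then show False by simp
  qed
  show "l3 \<noteq> 0 \<or> l4 \<noteq> 0"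
  proof (rule ccontr)
    assume "\<not> (l3 \<noteq> 0 \<or> l4 \<noteq> 0)"
    then have "(0::'k) = 0 \<and> (1::'k) = 0" by (intro indep[OF iso _ b d]) simp_all
    then show False by simp
  qed
  define X where "X = pmult (lc Aa Ac k1 k2) (lc Ab Ad l1 l2) - pmult (lc Aa Ac k3 k4) (lc Ab Ad l3 l4)"
  define Y where "Y = pmult (lc Ab Ad l1 l2) (lc Aa Ac k1 k2) - smul q (pmult (lc Ab Ad l3 l4) (lc Aa Ac k3 k4))"
  have XJ: "X \<in> J p" unfolding X_def by (rule rel1[OF iso a b c d])
  have YJ: "Y \<in> J p" unfolding Y_def by (rule rel2[OF iso a b c d])
  have vX: "X (V1,[Aa,Ad]) = k1 * l2 - k3 * l4" "X (V1,[Ac,Ab]) = k2 * l1 - k4 * l3"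
    "X (V1,[Aa,Ab]) = k1 * l1 - k3 * l3" "X (V1,[Ac,Ad]) = k2 * l2 - k4 * l4"
    unfolding X_def by (simp_all add: pmult_len2 lc_finite lc_eval)
  have vY: "Y (V2,[Ab,Ac]) = l1 * k2 - q * (l3 * k4)" "Y (V2,[Ad,Aa]) = l2 * k1 - q * (l4 * k3)"
    "Y (V2,[Ab,Aa]) = l1 * k1 - q * (l3 * k3)" "Y (V2,[Ad,Ac]) = l2 * k2 - q * (l4 * k4)"
    unfolding Y_def by (simp_all add: pmult_len2 lc_finite lc_eval smul_def)
  from XJ show "k1 * l2 - k3 * l4 = 0" "k2 * l1 - k4 * l3 = 0"
    "(k1 * l1 - k3 * l3) + (k2 * l2 - k4 * l4) = 0"
    unfolding J_def vX[symmetric] by simp_all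
  from YJ show "l1 * k2 - q * (l3 * k4) = 0" "l2 * k1 - q * (l4 * k3) = 0"
    "p * (l1 * k1 - q * (l3 * k3)) + (l2 * k2 - q * (l4 * k4)) = 0"
    unfolding J_def vY[symmetric] by simp_all
qed

theorem lemma3p6:
  fixes p q :: "'k::field_char_0"
    and \<Phi> :: "(qpath \<Rightarrow> 'k) set \<Rightarrow> (qpath \<Rightarrow> 'k) set"
  assumes "alg_closed TYPE('k)"
    and "p \<noteq> 0" and "q \<noteq> 0" and "q \<noteq> 1"
    and "graded_iso q p \<Phi>" and "type_I q p \<Phi>"
  shows "(\<exists>k1 k2 k3 k4 l1 l2 l3 l4 :: 'k.
            k1 * k4 - k2 * k3 \<noteq> 0 \<and> l1 * l4 - l2 * l3 \<noteq> 0 \<and>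
            \<Phi> (cls q (arr Aa)) = cls p (smul k1 (arr Aa) + smul k2 (arr Ac)) \<and>
            \<Phi> (cls q (arr Ab)) = cls p (smul l1 (arr Ab) + smul l2 (arr Ad)) \<and>
            \<Phi> (cls q (arr Ac)) = cls p (smul k3 (arr Aa) + smul k4 (arr Ac)) \<and>
            \<Phi> (cls q (arr Ad)) = cls p (smul l3 (arr Ab) + smul l4 (arr Ad)))
       \<and> (\<forall>k1 k2 k3 k4 l1 l2 l3 l4 :: 'k.
            \<Phi> (cls q (arr Aa)) = cls p (smul k1 (arr Aa) + smul k2 (arr Ac)) \<and>
            \<Phi> (cls q (arr Ab)) = cls p (smul l1 (arr Ab) + smul l2 (arr Ad)) \<and>
            \<Phi> (cls q (arr Ac)) = cls p (smul k3 (arr Aa) + smul k4 (arr Ac)) \<and>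
            \<Phi> (cls q (arr Ad)) = cls p (smul l3 (arr Ab) + smul l4 (arr Ad)) \<and>
            k1 \<noteq> 0 \<and> k4 \<noteq> 0 \<longrightarrow> p = q)"
proof -
  have iso: "alg_iso q p \<Phi>" using assms(5) unfolding graded_iso_def by simp
  obtain k1 k2 where a: "\<Phi> (cls q (arr Aa)) = cls p (lc Aa Ac k1 k2)" using arrow_lc(1)[OF assms(5,6)] by blast
  obtain k3 k4 where c: "\<Phi> (cls q (arr Ac)) = cls p (lc Aa Ac k3 k4)" using arrow_lc(2)[OF assms(5,6)] by blast
  obtain l1 l2 where b: "\<Phi> (cls q (arr Ab)) = cls p (lc Ab Ad l1 l2)" using arrow_lc(3)[OF assms(5,6)] by blast
  obtain l3 l4 where d: "\<Phi> (cls q (arr Ad)) = cls p (lc Ab Ad l3 l4)" using arrow_lc(4)[OF assms(5,6)] by blast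
  have dk: "k1 * k4 - k2 * k3 \<noteq> 0" by (rule det_nonzero[OF iso _ a c]) simp
  have dl: "l1 * l4 - l2 * l3 \<noteq> 0" by (rule det_nonzero[OF iso _ b d]) simp
  show ?thesis
  proof (intro conjI allI impI)
    show "\<exists>k1 k2 k3 k4 l1 l2 l3 l4 :: 'k.
            k1 * k4 - k2 * k3 \<noteq> 0 \<and> l1 * l4 - l2 * l3 \<noteq> 0 \<and>
            \<Phi> (cls q (arr Aa)) = cls p (smul k1 (arr Aa) + smul k2 (arr Ac)) \<and>
            \<Phi> (cls q (arr Ab)) = cls p (smul l1 (arr Ab) + smul l2 (arr Ad)) \<and>
            \<Phi> (cls q (arr Ac)) = cls p (smul k3 (arr Aa) + smul k4 (arr Ac)) \<and>
            \<Phi> (cls q (arr Ad)) = cls p (smul l3 (arr Ab) + smul l4 (arr Ad))"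
      using dk dl a b c d unfolding lc_def by blast
  next
    fix k1 k2 k3 k4 l1 l2 l3 l4 :: 'k
    assume h: "\<Phi> (cls q (arr Aa)) = cls p (smul k1 (arr Aa) + smul k2 (arr Ac)) \<and>
            \<Phi> (cls q (arr Ab)) = cls p (smul l1 (arr Ab) + smul l2 (arr Ad)) \<and>
            \<Phi> (cls q (arr Ac)) = cls p (smul k3 (arr Aa) + smul k4 (arr Ac)) \<and>
            \<Phi> (cls q (arr Ad)) = cls p (smul l3 (arr Ab) + smul l4 (arr Ad)) \<and>
            k1 \<noteq> 0 \<and> k4 \<noteq> 0"
    show "p = q"
      by (rule second_part[OF iso assms(4), of k1 k2 l1 l2 k3 k4 l3 l4]) (use h in \<open>simp_all add: lc_def\<close>)
  qed
qed

end
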